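(* Let $g:\{\pm1\}^{m_1}\times\{\pm1\}^{m_2}\to\{\pm1\}$ be a gadget with $\hat g(S,T)=0$ whenever $S=\emptyset$ or $T=\emptyset$. Let $\mathcal{C}:(\{\pm1\}^{m_1})^n\times(\{\pm1\}^{m_2})^n\to[-1,1]$ be a randomized two-party protocol and $\mathcal{C}_{\downarrow g}$ its $g$-fiber. Then for every $I\subseteq[n]$, $$\widehat{\mathcal{C}_{\downarrow g}}(I)=\sum_{\substack{S^I,T^I\\ S_i\ne\emptyset,\,T_i\ne\emptyset\ \forall i\in I}}\hat{\mathcal{C}}(S^I,T^I)\prod_{i\in I}\hat g(S_i,T_i).$$
   Context: Fourier coefficients of the gadget: $\hat g(S,T)=\mathbb{E}[g(\mathbf{x},\mathbf{y})\prod_{j\in S}\mathbf{x}_j\prod_{j\in T}\mathbf{y}_j]$ for $S\subseteq[m_1],T\subseteq[m_2]$ and $\mathbf{x},\mathbf{y}$ uniform. A randomized protocol $\mathcal{C}$ is identified with the function $(x,y)\mapsto$ its expected output over internal randomness. Inputs $x\in(\{\pm1\}^{m_1})^n$ consist of blocks $x_1,\dots,x_n\in\{\pm1\}^{m_1}$, similarly for $y$. For tuples $S^{[n]}=(S_i)_{i\in[n]}$ with $S_i\subseteq[m_1]$ and $T^{[n]}=(T_i)_{i\in[n]}$ with $T_i\subseteq[m_2]$, $\hat{\mathcal{C}}(S^{[n]},T^{[n]})=\mathbb{E}[\mathcal{C}(\mathbf{x},\mathbf{y})\prod_i\prod_{j\in S_i}\mathbf{x}_{i,j}\prod_i\prod_{j\in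 T_i}\mathbf{y}_{i,j}]$ for uniform $\mathbf{x},\mathbf{y}$. $S^I,T^I$ denote such tuples with $S_j=T_j=\emptyset$ for all $j\notin I$. The $g$-fiber is $\mathcal{C}_{\downarrow g}(z)=\mathbb{E}[\mathcal{C}(\mathbf{x},\mathbf{y})\mid g(\mathbf{x}_i,\mathbf{y}_i)=z_i\ \forall i]$ for $z\in\{\pm1\}^n$, with $\mathbf{x},\mathbf{y}$ uniform, and $\widehat{\mathcal{C}_{\downarrow g}}(I)=\mathbb{E}_{\mathbf z}[\mathcal{C}_{\downarrow g}(\mathbf z)\prod_{i\in I}\mathbf z_i]$ for uniform $\mathbf z\in\{\pm1\}^n$. *)

theory Defs
  imports Complex_Main "HOL-Library.FuncSet"
begin

definition cube :: "nat \<Rightarrow> (nat \<Rightarrow> real) set" where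
  "cube m = {0..<m} \<rightarrow>\<^sub>E {-1, 1}"

definition blocks :: "nat \<Rightarrow> nat \<Rightarrow> (nat \<Rightarrow> nat \<Rightarrow> real) set" where
  "blocks n m = {0..<n} \<rightarrow>\<^sub>E cube m"

definition avg :: "'a set \<Rightarrow> ('a \<Rightarrow> real) \<Rightarrow> real" where
  "avg A f = (\<Sum>a\<in>A. f a) / real (card A)"

definition ghat :: "nat \<Rightarrow> nat \<Rightarrow> ((nat \<Rightarrow> real) \<Rightarrow> (nat \<Rightarrow> real) \<Rightarrow> real)
    \<Rightarrow> nat set \<Rightarrow> nat set \<Rightarrow> real" where
  "ghat m1 m2 g S T = avg (cube m1 \<times> cube m2)
     (\<lambda>(x, y). g x y * (\<Prod>j\<in>S. x j) * (\<Prod>j\<in>T. y j))"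

definition Chat :: "nat \<Rightarrow> nat \<Rightarrow> nat
    \<Rightarrow> ((nat \<Rightarrow> nat \<Rightarrow> real) \<Rightarrow> (nat \<Rightarrow> nat \<Rightarrow> real) \<Rightarrow> real)
    \<Rightarrow> (nat \<Rightarrow> nat set) \<Rightarrow> (nat \<Rightarrow> nat set) \<Rightarrow> real" where
  "Chat n m1 m2 C SS TT = avg (blocks n m1 \<times> blocks n m2)
     (\<lambda>(x, y). C x y * (\<Prod>i<n. \<Prod>j\<in>SS i. x i j) * (\<Prod>i<n. \<Prod>j\<in>TT i. y i j))"

text \<open>The g-fiber: conditional expectation of C(x,y) given g(x_i,y_i) = z_i for all i,
  with x, y uniform (i.e. the average of C over the conditioning event).\<close>
definition fiber :: "nat \<Rightarrow> nat \<Rightarrow> nat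
    \<Rightarrow> ((nat \<Rightarrow> real) \<Rightarrow> (nat \<Rightarrow> real) \<Rightarrow> real)
    \<Rightarrow> ((nat \<Rightarrow> nat \<Rightarrow> real) \<Rightarrow> (nat \<Rightarrow> nat \<Rightarrow> real) \<Rightarrow> real)
    \<Rightarrow> (nat \<Rightarrow> real) \<Rightarrow> real" where
  "fiber n m1 m2 g C z = avg {(x, y) \<in> blocks n m1 \<times> blocks n m2. \<forall>i<n. g (x i) (y i) = z i}
     (\<lambda>(x, y). C x y)"

definition fiber_hat :: "nat \<Rightarrow> nat \<Rightarrow> nat
    \<Rightarrow> ((nat \<Rightarrow> real) \<Rightarrow> (nat \<Rightarrow> real) \<Rightarrow> real)
    \<Rightarrow> ((nat \<Rightarrow> nat \<Rightarrow> real) \<Rightarrow> (nat \<Rightarrow> nat \<Rightarrow> real) \<Rightarrow> real)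
    \<Rightarrow> nat set \<Rightarrow> real" where
  "fiber_hat n m1 m2 g C I = avg (cube n) (\<lambda>z. fiber n m1 m2 g C z * (\<Prod>i\<in>I. z i))"

definition tuples_nonempty_on :: "nat \<Rightarrow> nat \<Rightarrow> nat set \<Rightarrow> (nat \<Rightarrow> nat set) set" where
  "tuples_nonempty_on n m I =
     PiE {0..<n} (\<lambda>i. if i \<in> I then Pow {0..<m} - {{}} else {{}})"

end

theory Submission
  imports Defs
begin

lemma finite_cube[simp]: "finite (cube m)" unfolding cube_def by (simp add: finite_PiE)
lemma card_cube: "card (cube m) = 2^m"
proof -
  have "card {-1,1::real} = 2" by simp
  then show ?thesis unfolding cube_def apply (simp add: card_PiE) by (simp add: numeral_2_eq_2)
qed
lemma sq1: "(a::real) \<in> {-1,1} \<Longrightarrow> a * a = 1" by auto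
lemma finite_blocks[simp]: "finite (blocks n m)" unfolding blocks_def by (simp add: finite_PiE)
lemma card_blocks: "card (blocks n m) = (2^m)^n" unfolding blocks_def by (simp add: card_PiE card_cube)

lemma sum_chi:
  assumes "x \<in> cube m" "x' \<in> cube m"
  shows "(\<Sum>S\<in>Pow {0..<m}. (\<Prod>j\<in>S. x j) * (\<Prod>j\<in>S. x' j)) = (if x = x' then 2^m else 0)"
proof -
  have "(\<Sum>S\<in>Pow {0..<m}. (\<Prod>j\<in>S. x j) * (\<Prod>j\<in>S. x' j))
      = (\<Sum>S\<in>Pow {0..<m}. (\<Prod>j\<in>S. x j * x' j) * (\<Prod>j\<in>{0..<m}-S. 1))"
    by (simp add: prod.distrib)
  also have "\<dots> = (\<Prod>j\<in>{0..<m}. x j * x' j + 1)"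
    by (rule prod_add[symmetric]) simp
  finally have eq: "(\<Sum>S\<in>Pow {0..<m}. (\<Prod>j\<in>S. x j) * (\<Prod>j\<in>S. x' j)) = (\<Prod>j\<in>{0..<m}. x j * x' j + 1)" .
  have xv: "\<And>j. j < m \<Longrightarrow> x j \<in> {-1,1}" "\<And>j. j < m \<Longrightarrow> x' j \<in> {-1,1}"
    using assms unfolding cube_def by auto
  show ?thesis
  proof (cases "x = x'")
    case True
    have "(\<Prod>j\<in>{0..<m}. x j * x' j + 1) = (\<Prod>j\<in>{0..<m}. 2)"
      using xv True sq1 by (intro prod.cong) auto
    then show ?thesis using eq True by simp
  next
    case False
    then obtain j where j: "x j \<noteq> x' j" by auto
    have "j < m"
    proof (rule ccontr)
      assume "\<not> j < m"
      then have "x j = undefined" "x' j = undefined" using assms unfolding cube_def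
        by (auto simp: PiE_def extensional_def)
      then show False using j by simp
    qed
    then have "x j * x' j + 1 = 0" using xv(1)[OF \<open>j<m\<close>] xv(2)[OF \<open>j<m\<close>] j by auto
    then have "(\<Prod>j\<in>{0..<m}. x j * x' j + 1) = 0"
      using \<open>j < m\<close> by (intro prod_zero) auto
    then show ?thesis using eq False by simp
  qed
qed

lemma fourier:
  assumes "x \<in> cube m1" "y \<in> cube m2"
  shows "g x y = (\<Sum>S\<in>Pow {0..<m1}. \<Sum>T\<in>Pow {0..<m2}.
            ghat m1 m2 g S T * (\<Prod>j\<in>S. x j) * (\<Prod>j\<in>T. y j))"
proof -
  define P where "P = cube m1 \<times> cube m2"
  define N :: real where "N = 2^m1 * 2^m2"
  have cP: "real (card P) = N" unfolding P_def N_def by (simp add: card_cartesian_product card_cube)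
  have "(\<Sum>S\<in>Pow {0..<m1}. \<Sum>T\<in>Pow {0..<m2}.
            ghat m1 m2 g S T * (\<Prod>j\<in>S. x j) * (\<Prod>j\<in>T. y j))
     = (\<Sum>S\<in>Pow {0..<m1}. \<Sum>T\<in>Pow {0..<m2}. \<Sum>p\<in>P.
          g (fst p) (snd p) / N * ((\<Prod>j\<in>S. fst p j) * (\<Prod>j\<in>S. x j)) * ((\<Prod>j\<in>T. snd p j) * (\<Prod>j\<in>T. y j)))"
    unfolding ghat_def avg_def P_def[symmetric] cP
    by (simp add: sum_divide_distrib sum_distrib_right sum_distrib_left case_prod_beta mult_ac)
  also have "\<dots> = (\<Sum>p\<in>P. \<Sum>S\<in>Pow {0..<m1}. \<Sum>T\<in>Pow {0..<m2}.
          g (fst p) (snd p) / N * ((\<Prod>j\<in>S. fst p j) * (\<Prod>j\<in>S. x j)) * ((\<Prod>j\<in>T. snd p j) * (\<Prod>j\<in>T. y j)))"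
  proof -
    have "\<And>S. (\<Sum>T\<in>Pow {0..<m2}. \<Sum>p\<in>P. g (fst p) (snd p) / N * ((\<Prod>j\<in>S. fst p j) * (\<Prod>j\<in>S. x j)) * ((\<Prod>j\<in>T. snd p j) * (\<Prod>j\<in>T. y j)))
       = (\<Sum>p\<in>P. \<Sum>T\<in>Pow {0..<m2}. g (fst p) (snd p) / N * ((\<Prod>j\<in>S. fst p j) * (\<Prod>j\<in>S. x j)) * ((\<Prod>j\<in>T. snd p j) * (\<Prod>j\<in>T. y j)))"
      by (rule sum.swap)
    then show ?thesis by (simp only: sum.swap[of _ _ P])
  qed
  also have "\<dots> = (\<Sum>p\<in>P. g (fst p) (snd p) / N *
          (\<Sum>S\<in>Pow {0..<m1}. (\<Prod>j\<in>S. fst p j) * (\<Prod>j\<in>S. x j)) *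
          (\<Sum>T\<in>Pow {0..<m2}. (\<Prod>j\<in>T. snd p j) * (\<Prod>j\<in>T. y j)))"
    by (simp add: sum_distrib_left sum_distrib_right sum_divide_distrib mult_ac)
  also have "\<dots> = (\<Sum>p\<in>P. if p = (x, y) then g x y else 0)"
  proof (rule sum.cong[OF refl])
    fix p assume p: "p \<in> P"
    show "g (fst p) (snd p) / N *
          (\<Sum>S\<in>Pow {0..<m1}. (\<Prod>j\<in>S. fst p j) * (\<Prod>j\<in>S. x j)) *
          (\<Sum>T\<in>Pow {0..<m2}. (\<Prod>j\<in>T. snd p j) * (\<Prod>j\<in>T. y j)) = (if p = (x, y) then g x y else 0)"
      using p assms unfolding P_def N_def
      by (cases p) (auto simp: sum_chi)
  qed
  also have "\<dots> = g x y" using assms unfolding P_def by simp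
  finally show ?thesis by simp
qed


lemma fourier_ne:
  assumes g_hat0: "\<And>S T. S \<subseteq> {0..<m1} \<Longrightarrow> T \<subseteq> {0..<m2} \<Longrightarrow> S = {} \<or> T = {}
                   \<Longrightarrow> ghat m1 m2 g S T = 0"
    and "x \<in> cube m1" "y \<in> cube m2"
  shows "g x y = (\<Sum>S\<in>Pow {0..<m1} - {{}}. \<Sum>T\<in>Pow {0..<m2} - {{}}.
            ghat m1 m2 g S T * (\<Prod>j\<in>S. x j) * (\<Prod>j\<in>T. y j))"
proof -
  have "g x y = (\<Sum>S\<in>Pow {0..<m1}. \<Sum>T\<in>Pow {0..<m2}.
            ghat m1 m2 g S T * (\<Prod>j\<in>S. x j) * (\<Prod>j\<in>T. y j))"
    by (rule fourier[OF assms(2,3)])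
  also have "\<dots> = (\<Sum>S\<in>Pow {0..<m1} - {{}}. \<Sum>T\<in>Pow {0..<m2}.
            ghat m1 m2 g S T * (\<Prod>j\<in>S. x j) * (\<Prod>j\<in>T. y j))"
    by (rule sum.mono_neutral_right) (auto simp: g_hat0)
  also have "\<dots> = (\<Sum>S\<in>Pow {0..<m1} - {{}}. \<Sum>T\<in>Pow {0..<m2} - {{}}.
            ghat m1 m2 g S T * (\<Prod>j\<in>S. x j) * (\<Prod>j\<in>T. y j))"
    by (intro sum.cong[OF refl] sum.mono_neutral_right) (auto simp: g_hat0)
  finally show ?thesis .
qed

lemma balanced:
  assumes g_pm1: "\<And>x y. x \<in> cube m1 \<Longrightarrow> y \<in> cube m2 \<Longrightarrow> g x y \<in> {-1, 1}"
    and g0: "ghat m1 m2 g {} {} = 0"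
    and z: "z \<in> {-1, 1}"
  shows "real (card {p \<in> cube m1 \<times> cube m2. g (fst p) (snd p) = z}) = 2^m1 * 2^m2 / 2"
proof -
  define P where "P = cube m1 \<times> cube m2"
  define A where "A = {p \<in> P. g (fst p) (snd p) = 1}"
  define B where "B = {p \<in> P. g (fst p) (snd p) = -1}"
  have fP: "finite P" unfolding P_def by simp
  have cP: "card P = 2^m1 * 2^m2" unfolding P_def by (simp add: card_cartesian_product card_cube)
  have s0: "(\<Sum>p\<in>P. g (fst p) (snd p)) = 0"
    using g0 cP unfolding ghat_def avg_def P_def[symmetric] by (simp add: case_prod_beta)
  have PAB: "P = A \<union> B" unfolding A_def B_def P_def
  proof (intro equalityI subsetI)
    fix p assume "p \<in> cube m1 \<times> cube m2"
    then have "g (fst p) (snd p) \<in> {-1,1}" using g_pm1 by (cases p) auto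
    then show "p \<in> {p \<in> cube m1 \<times> cube m2. g (fst p) (snd p) = 1} \<union> {p \<in> cube m1 \<times> cube m2. g (fst p) (snd p) = -1}"
      using \<open>p \<in> cube m1 \<times> cube m2\<close> by auto
  qed auto
  have dAB: "A \<inter> B = {}" unfolding A_def B_def by auto
  have fA: "finite A" "finite B" using fP unfolding A_def B_def by auto
  have "(\<Sum>p\<in>P. g (fst p) (snd p)) = (\<Sum>p\<in>A. g (fst p) (snd p)) + (\<Sum>p\<in>B. g (fst p) (snd p))"
    using PAB dAB fA by (simp add: sum.union_disjoint)
  also have "\<dots> = real (card A) - real (card B)" unfolding A_def B_def by simp
  finally have d: "real (card A) = real (card B)" using s0 by simp
  have "card P = card A + card B" using PAB dAB fA by (simp add: card_Un_disjoint)
  then have "real (card A) = 2^m1 * 2^m2 / 2" "real (card B) = 2^m1 * 2^m2 / 2"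
  proof -
    have "real (card P) = real (card A) + real (card B)" using \<open>card P = card A + card B\<close> by simp
    moreover have "real (card P) = 2^m1 * 2^m2" using cP by simp
    ultimately show "real (card A) = 2^m1 * 2^m2 / 2" "real (card B) = 2^m1 * 2^m2 / 2"
      using d by linarith+
  qed
  then show ?thesis using z unfolding A_def B_def P_def by auto
qed


lemma card_E:
  assumes bal: "\<And>w. w \<in> {-1,1} \<Longrightarrow> real (card {p \<in> cube m1 \<times> cube m2. g (fst p) (snd p) = w}) = K"
    and z: "z \<in> cube n"
  shows "real (card {(x, y) \<in> blocks n m1 \<times> blocks n m2. \<forall>i<n. g (x i) (y i) = z i}) = K ^ n"
proof -
  define E where "E = {(x, y) \<in> blocks n m1 \<times> blocks n m2. \<forall>i<n. g (x i) (y i) = z i}"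
  define Q where "Q = PiE {0..<n} (\<lambda>i. {p \<in> cube m1 \<times> cube m2. g (fst p) (snd p) = z i})"
  define f where "f = (\<lambda>(x::nat\<Rightarrow>nat\<Rightarrow>real, y::nat\<Rightarrow>nat\<Rightarrow>real). restrict (\<lambda>i. (x i, y i)) {0..<n})"
  define f' where "f' = (\<lambda>q::nat \<Rightarrow> (nat\<Rightarrow>real) \<times> (nat\<Rightarrow>real). (restrict (\<lambda>i. fst (q i)) {0..<n}, restrict (\<lambda>i. snd (q i)) {0..<n}))"
  have "bij_betw f E Q"
  proof (rule bij_betw_byWitness[where f'=f'])
    show "\<forall>a\<in>E. f' (f a) = a"
      unfolding E_def f_def f'_def blocks_def
      by (auto simp: fun_eq_iff PiE_def extensional_def)
    show "\<forall>a'\<in>Q. f (f' a') = a'"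
      unfolding Q_def f_def f'_def
      by (auto simp: fun_eq_iff PiE_def extensional_def)
    show "f ` E \<subseteq> Q"
      unfolding E_def f_def Q_def blocks_def by (auto simp: PiE_iff)
    show "f' ` Q \<subseteq> E"
      unfolding E_def f'_def Q_def blocks_def by (auto simp: PiE_iff mem_Times_iff)
  qed
  then have "card E = card Q" by (rule bij_betw_same_card)
  moreover have "real (card Q) = K ^ n"
  proof -
    have "real (card Q) = (\<Prod>i\<in>{0..<n}. real (card {p \<in> cube m1 \<times> cube m2. g (fst p) (snd p) = z i}))"
      unfolding Q_def by (simp add: card_PiE)
    also have "\<dots> = (\<Prod>i\<in>{0..<n}. K)"
    proof (intro prod.cong[OF refl])
      fix i assume "i \<in> {0..<n}"
      then have "z i \<in> {-1,1}" using z unfolding cube_def by auto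
      then show "real (card {p \<in> cube m1 \<times> cube m2. g (fst p) (snd p) = z i}) = K" by (rule bal)
    qed
    finally show ?thesis by simp
  qed
  ultimately show ?thesis unfolding E_def by simp
qed


lemma expand:
  assumes g_hat0: "\<And>S T. S \<subseteq> {0..<m1} \<Longrightarrow> T \<subseteq> {0..<m2} \<Longrightarrow> S = {} \<or> T = {}
                   \<Longrightarrow> ghat m1 m2 g S T = 0"
    and x: "x \<in> blocks n m1" and y: "y \<in> blocks n m2" and I: "I \<subseteq> {0..<n}"
  shows "(\<Sum>SS\<in>tuples_nonempty_on n m1 I. \<Sum>TT\<in>tuples_nonempty_on n m2 I.
      (\<Prod>i<n. \<Prod>j\<in>SS i. x i j) * (\<Prod>i<n. \<Prod>j\<in>TT i. y i j) * (\<Prod>i\<in>I. ghat m1 m2 g (SS i) (TT i)))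
    = (\<Prod>i\<in>I. g (x i) (y i))"
proof -
  define A1 where "A1 = (\<lambda>i. if i \<in> I then Pow {0..<m1} - {{}} else {{}})"
  define A2 where "A2 = (\<lambda>i. if i \<in> I then Pow {0..<m2} - {{}} else {{}})"
  define f where "f = (\<lambda>i S T. (if i \<in> I then ghat m1 m2 g S T else 1) * (\<Prod>j\<in>S. x i j) * (\<Prod>j\<in>T. y i j))"
  have fI: "finite I" using I finite_subset by blast
  have "(\<Prod>i\<in>I. g (x i) (y i)) = (\<Prod>i\<in>{0..<n}. if i \<in> I then g (x i) (y i) else 1)"
    using I by (simp add: prod.If_cases Int_absorb1)
  also have "\<dots> = (\<Prod>i\<in>{0..<n}. \<Sum>S\<in>A1 i. \<Sum>T\<in>A2 i. f i S T)"
  proof (rule prod.cong[OF refl])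
    fix i assume i: "i \<in> {0..<n}"
    show "(if i \<in> I then g (x i) (y i) else 1) = (\<Sum>S\<in>A1 i. \<Sum>T\<in>A2 i. f i S T)"
    proof (cases "i \<in> I")
      case True
      have "x i \<in> cube m1" "y i \<in> cube m2" using x y i unfolding blocks_def by auto
      then show ?thesis using True fourier_ne[OF g_hat0] unfolding A1_def A2_def f_def by simp
    qed (simp add: A1_def A2_def f_def)
  qed
  also have "\<dots> = (\<Sum>SS\<in>PiE {0..<n} A1. \<Prod>i\<in>{0..<n}. \<Sum>T\<in>A2 i. f i (SS i) T)"
    by (rule prod_sum_PiE) (auto simp: A1_def)
  also have "\<dots> = (\<Sum>SS\<in>PiE {0..<n} A1. \<Sum>TT\<in>PiE {0..<n} A2. \<Prod>i\<in>{0..<n}. f i (SS i) (TT i))"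
    by (intro sum.cong[OF refl] prod_sum_PiE) (auto simp: A2_def)
  also have "\<dots> = (\<Sum>SS\<in>tuples_nonempty_on n m1 I. \<Sum>TT\<in>tuples_nonempty_on n m2 I.
      (\<Prod>i<n. \<Prod>j\<in>SS i. x i j) * (\<Prod>i<n. \<Prod>j\<in>TT i. y i j) * (\<Prod>i\<in>I. ghat m1 m2 g (SS i) (TT i)))"
  proof (intro sum.cong)
    fix SS TT
    have "(\<Prod>i\<in>{0..<n}. f i (SS i) (TT i)) = (\<Prod>i\<in>{0..<n}. if i \<in> I then ghat m1 m2 g (SS i) (TT i) else 1)
        * (\<Prod>i\<in>{0..<n}. \<Prod>j\<in>SS i. x i j) * (\<Prod>i\<in>{0..<n}. \<Prod>j\<in>TT i. y i j)"
      unfolding f_def by (simp add: prod.distrib)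
    also have "\<dots> = (\<Prod>i<n. \<Prod>j\<in>SS i. x i j) * (\<Prod>i<n. \<Prod>j\<in>TT i. y i j) * (\<Prod>i\<in>I. ghat m1 m2 g (SS i) (TT i))"
      using I by (simp add: prod.If_cases Int_absorb1 atLeast0LessThan)
    finally show "(\<Prod>i\<in>{0..<n}. f i (SS i) (TT i)) = (\<Prod>i<n. \<Prod>j\<in>SS i. x i j) * (\<Prod>i<n. \<Prod>j\<in>TT i. y i j) * (\<Prod>i\<in>I. ghat m1 m2 g (SS i) (TT i))" .
  qed (simp_all add: tuples_nonempty_on_def A1_def A2_def)
  finally show ?thesis by simp
qed


theorem fact7p4:
  fixes n m1 m2 :: nat
    and g :: "(nat \<Rightarrow> real) \<Rightarrow> (nat \<Rightarrow> real) \<Rightarrow> real"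
    and C :: "(nat \<Rightarrow> nat \<Rightarrow> real) \<Rightarrow> (nat \<Rightarrow> nat \<Rightarrow> real) \<Rightarrow> real"
    and I :: "nat set"
  assumes g_pm1: "\<And>x y. x \<in> cube m1 \<Longrightarrow> y \<in> cube m2 \<Longrightarrow> g x y \<in> {-1, 1}"
    and g_hat0: "\<And>S T. S \<subseteq> {0..<m1} \<Longrightarrow> T \<subseteq> {0..<m2} \<Longrightarrow> S = {} \<or> T = {}
                   \<Longrightarrow> ghat m1 m2 g S T = 0"
    and C_bounded: "\<And>x y. x \<in> blocks n m1 \<Longrightarrow> y \<in> blocks n m2 \<Longrightarrow> C x y \<in> {-1..1}"
    and I_sub: "I \<subseteq> {0..<n}"
  shows "fiber_hat n m1 m2 g C I =
    (\<Sum>SS\<in>tuples_nonempty_on n m1 I. \<Sum>TT\<in>tuples_nonempty_on n m2 I.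
        Chat n m1 m2 C SS TT * (\<Prod>i\<in>I. ghat m1 m2 g (SS i) (TT i)))"
proof -
  define N :: real where "N = 2^m1 * 2^m2"
  define K :: real where "K = N / 2"
  define B where "B = blocks n m1 \<times> blocks n m2"
  define G where "G = (\<lambda>p::(nat\<Rightarrow>nat\<Rightarrow>real)\<times>(nat\<Rightarrow>nat\<Rightarrow>real). \<Prod>i\<in>I. g (fst p i) (snd p i))"
  define F where "F = (\<lambda>p::(nat\<Rightarrow>nat\<Rightarrow>real)\<times>(nat\<Rightarrow>nat\<Rightarrow>real). restrict (\<lambda>i. g (fst p i) (snd p i)) {0..<n})"
  define E where "E z = {(x, y) \<in> blocks n m1 \<times> blocks n m2. \<forall>i<n. g (x i) (y i) = z i}" for z
  have fB: "finite B" unfolding B_def by simp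
  have cB: "real (card B) = N ^ n"
    unfolding B_def N_def by (simp add: card_cartesian_product card_blocks power_mult_distrib)
  have g0: "ghat m1 m2 g {} {} = 0" using g_hat0 by simp
  have bal: "\<And>w. w \<in> {-1,1} \<Longrightarrow> real (card {p \<in> cube m1 \<times> cube m2. g (fst p) (snd p) = w}) = K"
    using balanced[OF g_pm1 g0] unfolding K_def N_def by blast
  have cE: "\<And>z. z \<in> cube n \<Longrightarrow> real (card (E z)) = K ^ n"
    unfolding E_def by (rule card_E[OF bal])
  have cn: "real (card (cube n)) = 2 ^ n" by (simp add: card_cube)
  have EF: "\<And>z. z \<in> cube n \<Longrightarrow> E z = {p \<in> B. F p = z}"
    unfolding E_def B_def F_def cube_def
    by (auto simp: fun_eq_iff PiE_def extensional_def)
  have FB: "F ` B \<subseteq> cube n"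
  proof
    fix q assume "q \<in> F ` B"
    then obtain p where p: "p \<in> B" "q = F p" by auto
    have "\<And>i. i \<in> {0..<n} \<Longrightarrow> g (fst p i) (snd p i) \<in> {-1,1}"
    proof -
      fix i assume i: "i \<in> {0..<n}"
      have "fst p i \<in> cube m1" "snd p i \<in> cube m2"
        using p(1) i unfolding B_def blocks_def by (auto simp: PiE_iff)
      then show "g (fst p i) (snd p i) \<in> {-1,1}" by (rule g_pm1)
    qed
    then show "q \<in> cube n" unfolding p(2) F_def cube_def by (simp add: PiE_iff)
  qed
  have "fiber_hat n m1 m2 g C I = (\<Sum>z\<in>cube n. (\<Sum>p\<in>E z. C (fst p) (snd p)) / K ^ n * (\<Prod>i\<in>I. z i)) / 2 ^ n"
  proof -
    have "\<And>z. z \<in> cube n \<Longrightarrow> fiber n m1 m2 g C z = (\<Sum>p\<in>E z. C (fst p) (snd p)) / K ^ n"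
      unfolding fiber_def avg_def E_def[symmetric] using cE by (simp add: case_prod_beta)
    then have "(\<Sum>z\<in>cube n. fiber n m1 m2 g C z * (\<Prod>i\<in>I. z i)) = (\<Sum>z\<in>cube n. (\<Sum>p\<in>E z. C (fst p) (snd p)) / K ^ n * (\<Prod>i\<in>I. z i))"
      by (intro sum.cong refl) simp
    then show ?thesis unfolding fiber_hat_def avg_def cn by simp
  qed
  also have "\<dots> = (\<Sum>z\<in>cube n. \<Sum>p\<in>E z. C (fst p) (snd p) * G p) / N ^ n"
  proof -
    have "\<And>z. z \<in> cube n \<Longrightarrow> (\<Sum>p\<in>E z. C (fst p) (snd p)) / K ^ n * (\<Prod>i\<in>I. z i) / 2 ^ n
        = (\<Sum>p\<in>E z. C (fst p) (snd p) * G p) / N ^ n"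
    proof -
      fix z assume z: "z \<in> cube n"
      have "(\<Sum>p\<in>E z. C (fst p) (snd p) * G p) = (\<Sum>p\<in>E z. C (fst p) (snd p) * (\<Prod>i\<in>I. z i))"
        unfolding E_def G_def using I_sub by (intro sum.cong refl) (auto intro!: prod.cong)
      also have "\<dots> = (\<Sum>p\<in>E z. C (fst p) (snd p)) * (\<Prod>i\<in>I. z i)" by (simp add: sum_distrib_right)
      finally have "(\<Sum>p\<in>E z. C (fst p) (snd p) * G p) = (\<Sum>p\<in>E z. C (fst p) (snd p)) * (\<Prod>i\<in>I. z i)" .
      moreover have "N ^ n = K ^ n * 2 ^ n" unfolding K_def by (simp add: power_mult_distrib[symmetric])
      ultimately show "(\<Sum>p\<in>E z. C (fst p) (snd p)) / K ^ n * (\<Prod>i\<in>I. z i) / 2 ^ n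
        = (\<Sum>p\<in>E z. C (fst p) (snd p) * G p) / N ^ n" by simp
    qed
    then show ?thesis by (simp add: sum_divide_distrib)
  qed
  also have "\<dots> = (\<Sum>p\<in>B. C (fst p) (snd p) * G p) / N ^ n"
  proof -
    have "(\<Sum>z\<in>cube n. \<Sum>p\<in>E z. C (fst p) (snd p) * G p) = (\<Sum>z\<in>cube n. \<Sum>p\<in>{p \<in> B. F p = z}. C (fst p) (snd p) * G p)"
      using EF by (intro sum.cong) auto
    also have "\<dots> = (\<Sum>p\<in>B. C (fst p) (snd p) * G p)"
      by (rule sum.group[OF fB finite_cube FB])
    finally show ?thesis by simp
  qed
  also have "\<dots> = (\<Sum>SS\<in>tuples_nonempty_on n m1 I. \<Sum>TT\<in>tuples_nonempty_on n m2 I.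
        Chat n m1 m2 C SS TT * (\<Prod>i\<in>I. ghat m1 m2 g (SS i) (TT i)))"
  proof -
    have "(\<Sum>SS\<in>tuples_nonempty_on n m1 I. \<Sum>TT\<in>tuples_nonempty_on n m2 I.
        Chat n m1 m2 C SS TT * (\<Prod>i\<in>I. ghat m1 m2 g (SS i) (TT i)))
      = (\<Sum>SS\<in>tuples_nonempty_on n m1 I. \<Sum>TT\<in>tuples_nonempty_on n m2 I. \<Sum>p\<in>B.
          C (fst p) (snd p) * ((\<Prod>i<n. \<Prod>j\<in>SS i. fst p i j) * (\<Prod>i<n. \<Prod>j\<in>TT i. snd p i j) * (\<Prod>i\<in>I. ghat m1 m2 g (SS i) (TT i))) / N ^ n)"
      unfolding Chat_def avg_def B_def[symmetric] cB
      by (simp add: sum_divide_distrib sum_distrib_right sum_distrib_left case_prod_beta mult_ac)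
    also have "\<dots> = (\<Sum>p\<in>B. \<Sum>SS\<in>tuples_nonempty_on n m1 I. \<Sum>TT\<in>tuples_nonempty_on n m2 I.
          C (fst p) (snd p) * ((\<Prod>i<n. \<Prod>j\<in>SS i. fst p i j) * (\<Prod>i<n. \<Prod>j\<in>TT i. snd p i j) * (\<Prod>i\<in>I. ghat m1 m2 g (SS i) (TT i))) / N ^ n)"
    proof -
      have "\<And>SS. (\<Sum>TT\<in>tuples_nonempty_on n m2 I. \<Sum>p\<in>B.
          C (fst p) (snd p) * ((\<Prod>i<n. \<Prod>j\<in>SS i. fst p i j) * (\<Prod>i<n. \<Prod>j\<in>TT i. snd p i j) * (\<Prod>i\<in>I. ghat m1 m2 g (SS i) (TT i))) / N ^ n)
        = (\<Sum>p\<in>B. \<Sum>TT\<in>tuples_nonempty_on n m2 I.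
          C (fst p) (snd p) * ((\<Prod>i<n. \<Prod>j\<in>SS i. fst p i j) * (\<Prod>i<n. \<Prod>j\<in>TT i. snd p i j) * (\<Prod>i\<in>I. ghat m1 m2 g (SS i) (TT i))) / N ^ n)"
        by (rule sum.swap)
      then show ?thesis by (simp only: sum.swap[of _ _ B])
    qed
    also have "\<dots> = (\<Sum>p\<in>B. C (fst p) (snd p) * (\<Sum>SS\<in>tuples_nonempty_on n m1 I. \<Sum>TT\<in>tuples_nonempty_on n m2 I.
          (\<Prod>i<n. \<Prod>j\<in>SS i. fst p i j) * (\<Prod>i<n. \<Prod>j\<in>TT i. snd p i j) * (\<Prod>i\<in>I. ghat m1 m2 g (SS i) (TT i))) / N ^ n)"
      by (simp add: sum_distrib_left sum_divide_distrib)
    also have "\<dots> = (\<Sum>p\<in>B. C (fst p) (snd p) * G p / N ^ n)"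
    proof (rule sum.cong[OF refl])
      fix p assume "p \<in> B"
      then have "fst p \<in> blocks n m1" "snd p \<in> blocks n m2" unfolding B_def by auto
      then show "C (fst p) (snd p) * (\<Sum>SS\<in>tuples_nonempty_on n m1 I. \<Sum>TT\<in>tuples_nonempty_on n m2 I.
          (\<Prod>i<n. \<Prod>j\<in>SS i. fst p i j) * (\<Prod>i<n. \<Prod>j\<in>TT i. snd p i j) * (\<Prod>i\<in>I. ghat m1 m2 g (SS i) (TT i))) / N ^ n
          = C (fst p) (snd p) * G p / N ^ n"
        unfolding G_def by (simp only: expand[OF g_hat0 _ _ I_sub])
    qed
    finally show ?thesis by (simp add: sum_divide_distrib)
  qed
  finally show ?thesis .
qed

end
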